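(* Let $G$ be a graph and let $G_{(2)}$ be the graph obtained from $G$ by subdividing each edge an even number of times, i.e. each edge $uv$ of $G$ is replaced by an induced path between $u$ and $v$ having an even number of internal (new) vertices, these paths being internally vertex-disjoint. Then $G$ is $1$-extendable if and only if $G_{(2)}$ is $1$-extendable.
   Context: All graphs are finite, simple and undirected. A graph is $1$-extendable if every vertex belongs to some maximum independent set (an independent set of maximum size) of the graph. *)

theory Defs
  imports Main
begin

definition graph :: "'a set \<Rightarrow> ('a \<Rightarrow> 'a \<Rightarrow> bool) \<Rightarrow> bool" where
  "graph V E \<longleftrightarrow> finite V \<and> (\<forall>u v. E u v \<longrightarrow> E v u) \<and> (\<forall>u. \<not> E u u)
     \<and> (\<forall>u v. E u v \<longrightarrow> u \<in> V \<and> v \<in> V)"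

definition indep_set :: "'a set \<Rightarrow> ('a \<Rightarrow> 'a \<Rightarrow> bool) \<Rightarrow> 'a set \<Rightarrow> bool" where
  "indep_set V E S \<longleftrightarrow> S \<subseteq> V \<and> (\<forall>u\<in>S. \<forall>v\<in>S. \<not> E u v)"

definition max_indep_set :: "'a set \<Rightarrow> ('a \<Rightarrow> 'a \<Rightarrow> bool) \<Rightarrow> 'a set \<Rightarrow> bool" where
  "max_indep_set V E S \<longleftrightarrow> indep_set V E S \<and> (\<forall>T. indep_set V E T \<longrightarrow> card T \<le> card S)"

definition one_extendable :: "'a set \<Rightarrow> ('a \<Rightarrow> 'a \<Rightarrow> bool) \<Rightarrow> bool" where
  "one_extendable V E \<longleftrightarrow> (\<forall>v\<in>V. \<exists>S. max_indep_set V E S \<and> v \<in> S)"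

definition consec :: "'a list \<Rightarrow> 'a \<Rightarrow> 'a \<Rightarrow> bool" where
  "consec L a b \<longleftrightarrow> (\<exists>i. Suc i < length L \<and>
      ((L ! i = a \<and> L ! Suc i = b) \<or> (L ! i = b \<and> L ! Suc i = a)))"

text \<open>The edges of
(W,F) are exactly the consecutive pairs on these paths (so the paths are induced).\<close>
definition even_subdivision ::
  "'a set \<Rightarrow> ('a \<Rightarrow> 'a \<Rightarrow> bool) \<Rightarrow> 'a set \<Rightarrow> ('a \<Rightarrow> 'a \<Rightarrow> bool) \<Rightarrow> bool" where
  "even_subdivision V E W F \<longleftrightarrow> (\<exists>P :: 'a \<Rightarrow> 'a \<Rightarrow> 'a list.
     (\<forall>u v. E u v \<longrightarrow> P v u = rev (P u v)) \<and>
     (\<forall>u v. E u v \<longrightarrow> distinct (P u v) \<and> even (length (P u v)) \<and> set (P u v) \<inter> V = {}) \<and>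
     (\<forall>u v x y. E u v \<longrightarrow> E x y \<longrightarrow> {u, v} \<noteq> {x, y} \<longrightarrow> set (P u v) \<inter> set (P x y) = {}) \<and>
     W = V \<union> (\<Union>{set (P u v) | u v. E u v}) \<and>
     (\<forall>a b. F a b \<longleftrightarrow> (\<exists>u v. E u v \<and> consec (u # P u v @ [v]) a b)))"

end

theory Submission
  imports Defs
begin

lemma consec_mem: "consec M a b \<Longrightarrow> a \<in> set M \<and> b \<in> set M"
  unfolding consec_def by (auto intro: nth_mem)

lemma consec_sym: "consec M a b = consec M b a" unfolding consec_def by blast

lemma consec_Cons: "consec M a b \<Longrightarrow> consec (x#M) a b"
proof -
  assume "consec M a b"
  then obtain i where "Suc i < length M" "(M ! i = a \<and> M ! Suc i = b) \<or> (M ! i = b \<and> M ! Suc i = a)"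
    unfolding consec_def by blast
  then show ?thesis unfolding consec_def by (intro exI[of _ "Suc i"]) auto
qed

lemma consec_snoc: "consec M a b \<Longrightarrow> consec (M@[y]) a b"
proof -
  assume "consec M a b"
  then obtain i where "Suc i < length M" "(M ! i = a \<and> M ! Suc i = b) \<or> (M ! i = b \<and> M ! Suc i = a)"
    unfolding consec_def by blast
  then show ?thesis unfolding consec_def by (intro exI[of _ i]) (auto simp: nth_append)
qed

lemma consec_head: "consec (x#y#r) x y" unfolding consec_def by (intro exI[of _ 0]) auto

lemma consec_rev: "consec M a b \<Longrightarrow> consec (rev M) a b"
proof -
  assume "consec M a b"
  then obtain i where i: "Suc i < length M" "(M ! i = a \<and> M ! Suc i = b) \<or> (M ! i = b \<and> M ! Suc i = a)"
    unfolding consec_def by blast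
  define j where "j = length M - 2 - i"
  have j: "Suc j < length M" using i j_def by auto
  have "rev M ! j = M ! Suc i" using j i by (simp add: rev_nth j_def Suc_diff_Suc numeral_2_eq_2)
  moreover have "rev M ! Suc j = M ! i" using j i by (simp add: rev_nth j_def Suc_diff_Suc numeral_2_eq_2)
  ultimately show ?thesis using i j unfolding consec_def by (intro exI[of _ j]) auto
qed

lemma path_bound: "(\<And>a b. consec M a b \<Longrightarrow> \<not>(a\<in>T \<and> b\<in>T)) \<Longrightarrow> card (T \<inter> set M) \<le> (length M + 1) div 2"
proof (induction M rule: induct_list012)
  case 1
  then show ?case by simp
next
  case (2 x)
  have "card (T \<inter> set [x]) \<le> card {x}" by (rule card_mono) auto
  then show ?case by simp
next
  case (3 x y r)
  have h1: "\<not>(a\<in>T \<and> b\<in>T)" if "consec (y#r) a b" for a b using 3(3)[OF consec_Cons[OF that]] by blast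
  have h2: "\<not>(a\<in>T \<and> b\<in>T)" if "consec r a b" for a b using h1[OF consec_Cons[OF that]] by blast
  have ih1: "card (T \<inter> set r) \<le> (length r + 1) div 2" using 3(1) h2 by blast
  have ih2: "card (T \<inter> set (y#r)) \<le> (length (y#r) + 1) div 2" using 3(2) h1 by blast
  show ?case
  proof (cases "x \<in> T")
    case True
    have yT: "y \<notin> T" using 3(3)[OF consec_head] True by blast
    have "T \<inter> set (x#y#r) \<subseteq> insert x (T \<inter> set r)"
      using yT by auto
    then have "card (T \<inter> set (x#y#r)) \<le> card (insert x (T \<inter> set r))"
      by (intro card_mono) auto
    also have "\<dots> \<le> Suc (card (T \<inter> set r))" by (simp add: card_insert_if)
    also have "\<dots> \<le> (length (x#y#r) + 1) div 2" using ih1 by simp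
    finally show ?thesis .
  next
    case False
    have "T \<inter> set (x#y#r) = T \<inter> set (y#r)" using False by auto
    then show ?thesis using ih2 by simp
  qed
qed

locale esub =
  fixes V :: "'a set" and E :: "'a \<Rightarrow> 'a \<Rightarrow> bool" and W :: "'a set"
    and F :: "'a \<Rightarrow> 'a \<Rightarrow> bool" and P :: "'a \<Rightarrow> 'a \<Rightarrow> 'a list"
  assumes fin: "finite V" and Esym: "E u v \<Longrightarrow> E v u" and Eirr: "\<not> E u u"
    and EV: "E u v \<Longrightarrow> u \<in> V \<and> v \<in> V"
    and Psym: "E u v \<Longrightarrow> P v u = rev (P u v)"
    and Pdist: "E u v \<Longrightarrow> distinct (P u v)"
    and Peven: "E u v \<Longrightarrow> even (length (P u v))"
    and PV: "E u v \<Longrightarrow> set (P u v) \<inter> V = {}"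
    and Pdisj: "E u v \<Longrightarrow> E x y \<Longrightarrow> {u, v} \<noteq> {x, y} \<Longrightarrow> set (P u v) \<inter> set (P x y) = {}"
    and Wdef: "W = V \<union> (\<Union>{set (P u v) | u v. E u v})"
    and Fdef: "F a b \<longleftrightarrow> (\<exists>u v. E u v \<and> consec (u # P u v @ [v]) a b)"
begin

definition orient :: "('a \<times> 'a) set \<Rightarrow> bool" where
  "orient Or \<longleftrightarrow> Or \<subseteq> {(s,t). E s t} \<and> (\<forall>u v. E u v \<longrightarrow> ((u,v) \<in> Or \<longleftrightarrow> (v,u) \<notin> Or))"

lemma orient_exists:
  assumes Q: "\<And>u v. E u v \<Longrightarrow> Q u v \<or> Q v u"
  shows "\<exists>Or. orient Or \<and> (\<forall>s t. (s,t) \<in> Or \<longrightarrow> Q s t)"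
proof -
  define g where "g e = (SOME p. E (fst p) (snd p) \<and> Q (fst p) (snd p) \<and> e = {fst p, snd p})" for e
  define Or where "Or = {(s,t). E s t \<and> g {s,t} = (s,t)}"
  have g: "E (fst (g {u,v})) (snd (g {u,v})) \<and> Q (fst (g {u,v})) (snd (g {u,v})) \<and> {u,v} = {fst (g {u,v}), snd (g {u,v})}"
    if "E u v" for u v
    unfolding g_def
  proof (rule someI_ex)
    show "\<exists>p. E (fst p) (snd p) \<and> Q (fst p) (snd p) \<and> {u, v} = {fst p, snd p}"
      using Q[OF that] that Esym[OF that]
      by (metis fst_conv snd_conv insert_commute)
  qed
  have "orient Or" unfolding orient_def
  proof (intro conjI allI impI)
    show "Or \<subseteq> {(s, t). E s t}" unfolding Or_def by auto
  next
    fix u v assume uv: "E u v"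
    have ne: "u \<noteq> v" using uv Eirr by auto
    have c: "g {u,v} = (u,v) \<or> g {u,v} = (v,u)" using g[OF uv]
      by (metis doubleton_eq_iff prod.collapse)
    have "{v,u} = {u,v}" by auto
    then show "((u, v) \<in> Or) = ((v, u) \<notin> Or)" unfolding Or_def using c ne uv Esym[OF uv] by auto
  qed
  moreover have "Q s t" if "(s,t) \<in> Or" for s t
  proof -
    have "E s t" "g {s,t} = (s,t)" using that unfolding Or_def by auto
    then show ?thesis using g[of s t] by simp
  qed
  ultimately show ?thesis by blast
qed

lemma orient_sub: "orient Or \<Longrightarrow> (s,t) \<in> Or \<Longrightarrow> E s t"
  unfolding orient_def by auto

lemma orient_fin: "orient Or \<Longrightarrow> finite Or"
proof -
  assume o: "orient Or"
  have "Or \<subseteq> V \<times> V" using orient_sub[OF o] EV by auto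
  then show ?thesis using fin finite_subset by blast
qed

lemma orient_one: "orient Or \<Longrightarrow> E u v \<Longrightarrow> (u,v) \<in> Or \<or> (v,u) \<in> Or"
  unfolding orient_def by auto

lemma orient_inj: "orient Or \<Longrightarrow> (s,t) \<in> Or \<Longrightarrow> (s',t') \<in> Or \<Longrightarrow> {s,t} = {s',t'} \<Longrightarrow> (s,t) = (s',t')"
  unfolding orient_def by (auto simp: doubleton_eq_iff)

lemma orient_disj: "orient Or \<Longrightarrow> (s,t) \<in> Or \<Longrightarrow> (s',t') \<in> Or \<Longrightarrow> (s,t) \<noteq> (s',t') \<Longrightarrow>
   set (P s t) \<inter> set (P s' t') = {}"
  using orient_inj orient_sub Pdisj by metis

lemma W_orient: assumes o: "orient Or" shows "W = V \<union> (\<Union>(s,t)\<in>Or. set (P s t))"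
proof -
  have "\<Union>{set (P u v) | u v. E u v} = (\<Union>(s,t)\<in>Or. set (P s t))"
  proof (intro equalityI subsetI)
    fix x assume "x \<in> \<Union>{set (P u v) | u v. E u v}"
    then obtain u v where uv: "E u v" "x \<in> set (P u v)" by auto
    show "x \<in> (\<Union>(s,t)\<in>Or. set (P s t))"
    proof (cases "(u,v) \<in> Or")
      case True then show ?thesis using uv by auto
    next
      case False
      then have "(v,u) \<in> Or" using orient_one[OF o uv(1)] by auto
      moreover have "set (P v u) = set (P u v)" using Psym[OF uv(1)] by simp
      ultimately show ?thesis using uv by auto
    qed
  next
    fix x assume "x \<in> (\<Union>(s,t)\<in>Or. set (P s t))"
    then obtain a b where ab: "(a,b) \<in> Or" "x \<in> set (P a b)" by auto
    then have "E a b" using orient_sub[OF o] by blast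
    then show "x \<in> \<Union>{set (P u v) | u v. E u v}" using ab by blast
  qed
  then show ?thesis using Wdef by simp
qed

lemma finW: "finite W"
  unfolding Wdef
proof (intro finite_UnI finite_Union)
  show "finite V" by (rule fin)
  have "{set (P u v) | u v. E u v} = (\<lambda>(u,v). set (P u v)) ` {(u,v). E u v}" by auto
  moreover have "{(u,v). E u v} \<subseteq> V \<times> V" using EV by auto
  ultimately show "finite {set (P u v) | u v. E u v}" using fin
    by (metis finite_SigmaI finite_imageI finite_subset)
  show "\<And>M. M \<in> {set (P u v) |u v. E u v} \<Longrightarrow> finite M" by auto
qed

lemma F_orient: assumes o: "orient Or" and F: "F a b"
  shows "\<exists>s t. (s,t) \<in> Or \<and> consec (s # P s t @ [t]) a b"
proof -
  obtain u v where uv: "E u v" "consec (u # P u v @ [v]) a b" using F Fdef by auto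
  show ?thesis
  proof (cases "(u,v) \<in> Or")
    case True then show ?thesis using uv by auto
  next
    case False
    then have vu: "(v,u) \<in> Or" using orient_one[OF o uv(1)] by auto
    have "P u v = rev (P v u)" using Psym[OF Esym[OF uv(1)]] by simp
    then have "u # P u v @ [v] = rev (v # P v u @ [u])" by simp
    then have "consec (v # P v u @ [u]) a b" using consec_rev[OF uv(2)] by simp
    then show ?thesis using vu by auto
  qed
qed

lemma F_intro: "E s t \<Longrightarrow> consec (s # P s t @ [t]) a b \<Longrightarrow> F a b"
  using Fdef by auto

definition K :: nat where "K = card (W - V) div 2"

lemma K_orient: assumes o: "orient Or" shows "(\<Sum>(s,t)\<in>Or. length (P s t) div 2) = K"
proof -
  have WV: "W - V = (\<Union>(s,t)\<in>Or. set (P s t))"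
    using W_orient[OF o] PV orient_sub[OF o] by auto
  have "card (\<Union>p\<in>Or. set (P (fst p) (snd p))) = (\<Sum>p\<in>Or. card (set (P (fst p) (snd p))))"
  proof (rule card_UN_disjoint)
    show "finite Or" using orient_fin[OF o] .
    show "\<forall>i\<in>Or. finite (set (P (fst i) (snd i)))" by simp
    show "\<forall>i\<in>Or. \<forall>j\<in>Or. i \<noteq> j \<longrightarrow> set (P (fst i) (snd i)) \<inter> set (P (fst j) (snd j)) = {}"
      using orient_disj[OF o] by (metis prod.collapse)
  qed
  also have "\<dots> = (\<Sum>p\<in>Or. 2 * (length (P (fst p) (snd p)) div 2))"
  proof (rule sum.cong)
    fix p assume "p \<in> Or"
    then have "E (fst p) (snd p)" using orient_sub[OF o] by (metis prod.collapse)
    then show "card (set (P (fst p) (snd p))) = 2 * (length (P (fst p) (snd p)) div 2)"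
      using Pdist Peven distinct_card by fastforce
  qed simp
  finally have "card (W - V) = 2 * (\<Sum>p\<in>Or. length (P (fst p) (snd p)) div 2)"
    using WV by (simp add: sum_distrib_left split_def)
  then show ?thesis unfolding K_def by (simp add: split_def)
qed

end

lemma alt_indep:
  assumes d: "distinct M" and c: "consec M a b"
    and a: "a \<in> {M!p | p. even p \<and> Suc p < length M}" and b: "b \<in> {M!p | p. even p \<and> Suc p < length M}"
  shows False
proof -
  obtain i where i: "Suc i < length M" "(M ! i = a \<and> M ! Suc i = b) \<or> (M ! i = b \<and> M ! Suc i = a)"
    using c unfolding consec_def by blast
  obtain p where p: "even p" "Suc p < length M" "a = M!p" using a by blast
  obtain q where q: "even q" "Suc q < length M" "b = M!q" using b by blast
  from i(2) show False
  proof
    assume h: "M ! i = a \<and> M ! Suc i = b"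
    then have "i = p" "Suc i = q" using p q i(1) nth_eq_iff_index_eq[OF d] by (metis Suc_lessD)+
    then show False using p q by presburger
  next
    assume h: "M ! i = b \<and> M ! Suc i = a"
    then have "i = q" "Suc i = p" using p q i(1) nth_eq_iff_index_eq[OF d] by (metis Suc_lessD)+
    then show False using p q by presburger
  qed
qed

context esub begin

definition X :: "'a \<Rightarrow> 'a \<Rightarrow> 'a set" where
  "X s t = (\<lambda>j. P s t ! (2*j+1)) ` {..<length (P s t) div 2}"

lemma X_sub: "X s t \<subseteq> set (P s t)"
  unfolding X_def by (auto intro!: nth_mem)

lemma X_card: "E s t \<Longrightarrow> card (X s t) = length (P s t) div 2"
  unfolding X_def
proof -
  assume st: "E s t"
  have "inj_on (\<lambda>j. P s t ! (2*j+1)) {..<length (P s t) div 2}"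
    by (rule inj_onI) (auto simp: nth_eq_iff_index_eq[OF Pdist[OF st]])
  then show "card ((\<lambda>j. P s t ! (2*j+1)) ` {..<length (P s t) div 2}) = length (P s t) div 2"
    by (simp add: card_image)
qed

lemma X_pos: "x \<in> X s t \<Longrightarrow> x \<in> {(s # P s t @ [t])!p | p. even p \<and> Suc p < length (s # P s t @ [t])}"
proof -
  assume "x \<in> X s t"
  then obtain j where j: "j < length (P s t) div 2" "x = P s t ! (2*j+1)" unfolding X_def by auto
  have jl: "2*j+1 < length (P s t)" using j(1) by linarith
  have "(s # P s t @ [t]) ! (2*j+2) = P s t ! (2*j+1)" using jl by (simp add: nth_append)
  moreover have "Suc (2*j+2) < length (s # P s t @ [t])" using j(1) by simp
  ultimately show ?thesis using j(2) by (intro CollectI exI[of _ "2*j+2"]) auto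
qed

lemma Mdist: assumes st: "E s t" shows "distinct (s # P s t @ [t])"
proof -
  have "s \<in> V" "t \<in> V" using EV[OF st] by auto
  then have "s \<notin> set (P s t)" "t \<notin> set (P s t)" using PV[OF st] by auto
  moreover have "s \<noteq> t" using st Eirr by auto
  ultimately show ?thesis using Pdist[OF st] by simp
qed

lemma extend:
  assumes S: "indep_set V E S" and o: "orient Or" and nt: "\<And>s t. (s,t) \<in> Or \<Longrightarrow> t \<notin> S"
  shows "indep_set W F (S \<union> (\<Union>(s,t)\<in>Or. X s t)) \<and> card (S \<union> (\<Union>(s,t)\<in>Or. X s t)) = card S + K"
proof -
  let ?U = "\<Union>(s,t)\<in>Or. X s t"
  let ?S' = "S \<union> ?U"
  have SV: "S \<subseteq> V" using S unfolding indep_set_def by auto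
  have UW: "?U \<subseteq> (\<Union>(s,t)\<in>Or. set (P s t))" using X_sub by fastforce
  have UV: "?U \<inter> V = {}"
  proof -
    have "(\<Union>(s,t)\<in>Or. set (P s t)) \<inter> V = {}" using PV orient_sub[OF o] by fastforce
    then show ?thesis using UW by blast
  qed
  have sub: "?S' \<subseteq> W" using W_orient[OF o] SV UW by blast
  have key: "x \<in> {(s # P s t @ [t])!p | p. even p \<and> Suc p < length (s # P s t @ [t])}"
    if st: "(s,t) \<in> Or" and x: "x \<in> ?S'" "x \<in> set (s # P s t @ [t])" for s t x
  proof -
    have Est: "E s t" using orient_sub[OF o st] .
    consider "x = s" | "x = t" | "x \<in> set (P s t)" using x(2) by auto
    then show ?thesis
    proof cases
      case 1
      then show ?thesis by (intro CollectI exI[of _ 0]) auto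
    next
      case 2
      have "t \<in> V" using EV[OF Est] by auto
      then have "t \<notin> ?U" using UV by blast
      then show ?thesis using x(1) 2 nt[OF st] by auto
    next
      case 3
      have "x \<notin> V" using PV[OF Est] 3 by auto
      then have "x \<notin> S" using SV by auto
      then obtain s' t' where st': "(s',t') \<in> Or" "x \<in> X s' t'" using x(1) by auto
      have "(s',t') = (s,t)"
      proof (rule ccontr)
        assume "(s',t') \<noteq> (s,t)"
        then have "set (P s' t') \<inter> set (P s t) = {}" using orient_disj[OF o st'(1) st] by simp
        then show False using st'(2) X_sub 3 by blast
      qed
      then show ?thesis using X_pos st'(2) by auto
    qed
  qed
  have indep: "indep_set W F ?S'"
    unfolding indep_set_def
  proof (intro conjI ballI notI)
    show "?S' \<subseteq> W" by (rule sub)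
  next
    fix a b assume a: "a \<in> ?S'" and b: "b \<in> ?S'" and F: "F a b"
    obtain s t where st: "(s,t) \<in> Or" "consec (s # P s t @ [t]) a b" using F_orient[OF o F] by blast
    have m: "a \<in> set (s # P s t @ [t])" "b \<in> set (s # P s t @ [t])" using consec_mem[OF st(2)] by auto
    show False
      by (rule alt_indep[OF Mdist[OF orient_sub[OF o st(1)]] st(2) key[OF st(1) a m(1)] key[OF st(1) b m(2)]])
  qed
  have finS: "finite S" using SV fin finite_subset by blast
  have finU: "finite ?U" using orient_fin[OF o] unfolding X_def by auto
  have "card ?S' = card S + card ?U"
    by (rule card_Un_disjoint[OF finS finU]) (use SV UV in blast)
  also have "card ?U = (\<Sum>(s,t)\<in>Or. card (X s t))"
  proof -
    have "card (\<Union>p\<in>Or. X (fst p) (snd p)) = (\<Sum>p\<in>Or. card (X (fst p) (snd p)))"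
    proof (rule card_UN_disjoint)
      show "finite Or" using orient_fin[OF o] .
      show "\<forall>i\<in>Or. finite (X (fst i) (snd i))" unfolding X_def by simp
      show "\<forall>i\<in>Or. \<forall>j\<in>Or. i \<noteq> j \<longrightarrow> X (fst i) (snd i) \<inter> X (fst j) (snd j) = {}"
      proof (intro ballI impI)
        fix i j assume ij: "i \<in> Or" "j \<in> Or" "i \<noteq> j"
        obtain s t s' t' where e: "i = (s,t)" "j = (s',t')" by (cases i, cases j) auto
        have "set (P s t) \<inter> set (P s' t') = {}" using orient_disj[OF o] ij e by blast
        then show "X (fst i) (snd i) \<inter> X (fst j) (snd j) = {}" using X_sub[of s t] X_sub[of s' t'] e by auto
      qed
    qed
    then show ?thesis by (simp add: split_def)
  qed
  also have "\<dots> = (\<Sum>(s,t)\<in>Or. length (P s t) div 2)"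
  proof (rule sum.cong[OF refl])
    fix p assume p: "p \<in> Or"
    obtain s t where e: "p = (s,t)" by (cases p) auto
    have "E s t" using orient_sub[OF o] p e by blast
    then show "(case p of (s,t) \<Rightarrow> card (X s t)) = (case p of (s,t) \<Rightarrow> length (P s t) div 2)"
      using X_card e by simp
  qed
  also have "\<dots> = K" by (rule K_orient[OF o])
  finally show ?thesis using indep by simp
qed

end

context esub begin

lemma edge_bound:
  assumes T: "indep_set W F T" and st: "E s t"
  shows "card (T \<inter> set (P s t)) + (if s \<in> T \<and> t \<in> T then 1 else 0) \<le> length (P s t) div 2"
proof -
  let ?L = "P s t" let ?M = "s # P s t @ [t]"
  have nM: "\<not>(a\<in>T \<and> b\<in>T)" if "consec ?M a b" for a b
    using T F_intro[OF st that] unfolding indep_set_def by blast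
  have nL: "\<not>(a\<in>T \<and> b\<in>T)" if "consec ?L a b" for a b
    using nM[OF consec_Cons[OF consec_snoc[OF that]]] .
  have ev: "even (length ?L)" using Peven[OF st] .
  have bL: "card (T \<inter> set ?L) \<le> length ?L div 2"
    using path_bound[of ?L T, OF nL] ev by (metis even_succ_div_two)
  show ?thesis
  proof (cases "s \<in> T \<and> t \<in> T")
    case False then have "(if s \<in> T \<and> t \<in> T then 1 else 0) = (0::nat)" by (simp only: if_False)
    then show ?thesis using bL by (simp only: add_0_right)
  next
    case True
    have bM: "card (T \<inter> set ?M) \<le> (length ?M + 1) div 2" using path_bound[of ?M T, OF nM] .
    have "s \<in> V" "t \<in> V" using EV[OF st] by auto
    then have nin: "s \<notin> set ?L" "t \<notin> set ?L" using PV[OF st] by auto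
    have ne: "s \<noteq> t" using st Eirr by auto
    have eq: "T \<inter> set ?M = insert s (insert t (T \<inter> set ?L))" using True by auto
    have "card (T \<inter> set ?M) = card (T \<inter> set ?L) + 2" unfolding eq using nin ne by simp
    moreover have "(length ?M + 1) div 2 = length ?L div 2 + 1" using ev by simp
    ultimately show ?thesis using bM True by simp
  qed
qed

lemma contract:
  assumes T: "indep_set W F T" and o: "orient Or"
  shows "\<exists>R. indep_set V E R \<and> (v \<in> T \<inter> V \<longrightarrow> v \<in> R) \<and> card T \<le> card R + K"
proof -
  have TW: "T \<subseteq> W" using T unfolding indep_set_def by auto
  have finT: "finite T" using TW finW finite_subset by blast
  have finO: "finite Or" using orient_fin[OF o] .
  define B where "B = {p \<in> Or. fst p \<in> T \<and> snd p \<in> T}"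
  define f where "f p = (if fst p = v then snd p else fst p)" for p :: "'a \<times> 'a"
  define R where "R = T \<inter> V - f ` B"
  have cB: "card B = (\<Sum>p\<in>Or. if fst p \<in> T \<and> snd p \<in> T then 1 else 0)"
    unfolding B_def using sum.inter_filter[OF finO, of "\<lambda>_. 1::nat"] by simp
  have s1: "(\<Sum>p\<in>Or. card (T \<inter> set (P (fst p) (snd p)))) + card B \<le> K"
  proof -
    have "(\<Sum>p\<in>Or. card (T \<inter> set (P (fst p) (snd p)))) + card B
        = (\<Sum>p\<in>Or. card (T \<inter> set (P (fst p) (snd p))) + (if fst p \<in> T \<and> snd p \<in> T then 1 else 0))"
      unfolding cB by (simp add: sum.distrib)
    also have "\<dots> \<le> (\<Sum>p\<in>Or. length (P (fst p) (snd p)) div 2)"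
    proof (rule sum_mono)
      fix p assume p: "p \<in> Or"
      have "E (fst p) (snd p)" using orient_sub[OF o, of "fst p" "snd p"] p by simp
      then show "card (T \<inter> set (P (fst p) (snd p))) + (if fst p \<in> T \<and> snd p \<in> T then 1 else 0)
          \<le> length (P (fst p) (snd p)) div 2" by (rule edge_bound[OF T])
    qed
    also have "\<dots> = K" using K_orient[OF o] by (simp add: split_def)
    finally show ?thesis .
  qed
  have "T \<subseteq> (T \<inter> V) \<union> (\<Union>p\<in>Or. T \<inter> set (P (fst p) (snd p)))"
    using TW W_orient[OF o] by (auto simp: split_def)
  then have "card T \<le> card ((T \<inter> V) \<union> (\<Union>p\<in>Or. T \<inter> set (P (fst p) (snd p))))"
    by (intro card_mono) (auto simp: fin finO)
  also have "\<dots> \<le> card (T \<inter> V) + card (\<Union>p\<in>Or. T \<inter> set (P (fst p) (snd p)))"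
    by (rule card_Un_le)
  also have "card (\<Union>p\<in>Or. T \<inter> set (P (fst p) (snd p))) \<le> (\<Sum>p\<in>Or. card (T \<inter> set (P (fst p) (snd p))))"
    by (rule card_UN_le[OF finO])
  finally have c1: "card T \<le> card (T \<inter> V) + (\<Sum>p\<in>Or. card (T \<inter> set (P (fst p) (snd p))))" by simp
  have "T \<inter> V \<subseteq> R \<union> f ` B" unfolding R_def by auto
  then have "card (T \<inter> V) \<le> card (R \<union> f ` B)"
    by (intro card_mono) (auto simp: R_def fin B_def finO)
  also have "\<dots> \<le> card R + card (f ` B)" by (rule card_Un_le)
  also have "card (f ` B) \<le> card B" by (rule card_image_le) (auto simp: B_def finO)
  finally have c2: "card (T \<inter> V) \<le> card R + card B" by simp
  have cardR: "card T \<le> card R + K" using c1 c2 s1 by linarith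
  have indR: "indep_set V E R"
    unfolding indep_set_def
  proof (intro conjI ballI notI)
    show "R \<subseteq> V" unfolding R_def by auto
  next
    fix a b assume a: "a \<in> R" and b: "b \<in> R" and ab: "E a b"
    obtain p where p: "p \<in> Or" "{fst p, snd p} = {a,b}"
      using orient_one[OF o ab] by (metis fst_conv snd_conv insert_commute)
    have "a \<in> T" "b \<in> T" using a b unfolding R_def by auto
    then have "p \<in> B" using p unfolding B_def by auto
    moreover have "f p \<in> {a,b}" using p(2) unfolding f_def by auto
    ultimately show False using a b unfolding R_def by auto
  qed
  have "v \<in> R" if v: "v \<in> T \<inter> V"
  proof -
    have "v \<notin> f ` B"
    proof
      assume "v \<in> f ` B"
      then obtain p where p: "p \<in> B" "f p = v" by auto
      have "E (fst p) (snd p)" using p(1) orient_sub[OF o, of "fst p" "snd p"] unfolding B_def by auto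
      then show False using p(2) Eirr unfolding f_def by (auto split: if_splits)
    qed
    then show ?thesis using v unfolding R_def by auto
  qed
  then show ?thesis using indR cardR by blast
qed

end

context esub begin

lemma fwd:
  assumes one: "one_extendable V E"
  shows "one_extendable W F"
  unfolding one_extendable_def
proof
  fix w assume w: "w \<in> W"
  have "\<exists>S Or. max_indep_set V E S \<and> orient Or \<and> (\<forall>s t. (s,t) \<in> Or \<longrightarrow> t \<notin> S)
          \<and> w \<in> S \<union> (\<Union>(s,t)\<in>Or. X s t)"
  proof (cases "w \<in> V")
    case True
    obtain S where S: "max_indep_set V E S" "w \<in> S" using one True unfolding one_extendable_def by blast
    have "\<exists>Or. orient Or \<and> (\<forall>s t. (s,t) \<in> Or \<longrightarrow> t \<notin> S)"
    proof (rule orient_exists)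
      fix u v assume "E u v"
      then show "v \<notin> S \<or> u \<notin> S" using S(1) unfolding max_indep_set_def indep_set_def by blast
    qed
    then show ?thesis using S by blast
  next
    case False
    then obtain u v where uv: "E u v" "w \<in> set (P u v)" using w Wdef by auto
    obtain i where i: "i < length (P u v)" "w = P u v ! i" using uv(2) by (metis in_set_conv_nth)
    have "\<exists>s0 t0 j. E s0 t0 \<and> odd j \<and> j < length (P s0 t0) \<and> w = P s0 t0 ! j"
    proof (cases "odd i")
      case True then show ?thesis using uv i by blast
    next
      case False
      let ?j = "length (P u v) - 1 - i"
      have ev: "even (length (P u v))" using Peven[OF uv(1)] .
      have jl: "?j < length (P u v)" using i(1) by simp
      have "P v u ! ?j = P u v ! (length (P u v) - Suc ?j)" using Psym[OF uv(1)] jl by (simp add: rev_nth)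
      also have "length (P u v) - Suc ?j = i" using i(1) by simp
      finally have e1: "P v u ! ?j = P u v ! i" .
      have o1: "odd ?j" using ev False i(1) by presburger
      have l1: "?j < length (P v u)" using Psym[OF uv(1)] i(1) by simp
      show ?thesis
        by (rule exI[of _ v], rule exI[of _ u], rule exI[of _ ?j]) (use Esym[OF uv(1)] i(2) e1 o1 l1 in auto)
    qed
    then obtain s0 t0 j where j: "E s0 t0" "odd j" "j < length (P s0 t0)" "w = P s0 t0 ! j" by blast
    have s0V: "s0 \<in> V" using EV[OF j(1)] by auto
    obtain S where S: "max_indep_set V E S" "s0 \<in> S" using one s0V unfolding one_extendable_def by blast
    have t0: "t0 \<notin> S" using S j(1) unfolding max_indep_set_def indep_set_def by blast
    have "\<exists>Or. orient Or \<and> (\<forall>s t. (s,t) \<in> Or \<longrightarrow> t \<notin> S \<and> ({s,t} = {s0,t0} \<longrightarrow> s = s0))"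
    proof (rule orient_exists)
      fix u v assume uv: "E u v"
      have "u \<notin> S \<or> v \<notin> S" using uv S(1) unfolding max_indep_set_def indep_set_def by blast
      then show "(v \<notin> S \<and> ({u, v} = {s0, t0} \<longrightarrow> u = s0)) \<or> (u \<notin> S \<and> ({v, u} = {s0, t0} \<longrightarrow> v = s0))"
      proof (cases "{u,v} = {s0,t0}")
        case True
        then have "(u = s0 \<and> v = t0) \<or> (u = t0 \<and> v = s0)" by (simp add: doubleton_eq_iff)
        then show ?thesis using t0 by (auto simp: insert_commute)
      next
        case False
        then have "{v,u} \<noteq> {s0,t0}" by (simp add: insert_commute)
        then show ?thesis using False \<open>u \<notin> S \<or> v \<notin> S\<close> by blast
      qed
    qed
    then obtain Or where o: "orient Or" and Q: "\<And>s t. (s,t) \<in> Or \<Longrightarrow> t \<notin> S \<and> ({s,t} = {s0,t0} \<longrightarrow> s = s0)"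
      by blast
    have "(s0,t0) \<in> Or"
    proof (rule ccontr)
      assume "(s0,t0) \<notin> Or"
      then have "(t0,s0) \<in> Or" using orient_one[OF o j(1)] by blast
      then have "t0 = s0" using Q[of t0 s0] by (auto simp: insert_commute)
      then show False using j(1) Eirr by auto
    qed
    moreover have "w \<in> X s0 t0"
    proof -
      have j1: "j = 2 * (j div 2) + 1" using j(2) by presburger
      have j2: "j div 2 < length (P s0 t0) div 2" using j(3) Peven[OF j(1)] by presburger
      show ?thesis unfolding X_def
        by (rule image_eqI[where x="j div 2"]) (use j1 j2 j(4) in auto)
    qed
    ultimately have "w \<in> S \<union> (\<Union>(s,t)\<in>Or. X s t)" by blast
    then show ?thesis using S(1) o Q by blast
  qed
  then obtain S Or where S: "max_indep_set V E S" and o: "orient Or" and nt: "\<And>s t. (s,t) \<in> Or \<Longrightarrow> t \<notin> S"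
     and wS: "w \<in> S \<union> (\<Union>(s,t)\<in>Or. X s t)" by blast
  have e: "indep_set W F (S \<union> (\<Union>(s,t)\<in>Or. X s t)) \<and> card (S \<union> (\<Union>(s,t)\<in>Or. X s t)) = card S + K"
  proof -
    have SI: "indep_set V E S" using S unfolding max_indep_set_def by blast
    show ?thesis by (rule extend[OF SI o nt])
  qed
  have "max_indep_set W F (S \<union> (\<Union>(s,t)\<in>Or. X s t))"
    unfolding max_indep_set_def
  proof (intro conjI allI impI)
    show "indep_set W F (S \<union> (\<Union>(s,t)\<in>Or. X s t))" using e by blast
  next
    fix T assume T: "indep_set W F T"
    obtain R where R: "indep_set V E R" "card T \<le> card R + K" using contract[OF T o] by blast
    have "card R \<le> card S" using R(1) S unfolding max_indep_set_def by blast
    then show "card T \<le> card (S \<union> (\<Union>(s,t)\<in>Or. X s t))" using e R(2) by simp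
  qed
  then show "\<exists>S. max_indep_set W F S \<and> w \<in> S" using wS by blast
qed

lemma bwd:
  assumes one: "one_extendable W F"
  shows "one_extendable V E"
  unfolding one_extendable_def
proof
  fix v assume v: "v \<in> V"
  then have "v \<in> W" using Wdef by auto
  then obtain T where T: "max_indep_set W F T" "v \<in> T" using one unfolding one_extendable_def by blast
  obtain Or0 where o0: "orient Or0" using orient_exists[of "\<lambda>_ _. True"] by blast
  obtain R where R: "indep_set V E R" "v \<in> T \<inter> V \<longrightarrow> v \<in> R" "card T \<le> card R + K"
    using contract[OF _ o0] T(1) unfolding max_indep_set_def by blast
  have "max_indep_set V E R"
    unfolding max_indep_set_def
  proof (intro conjI allI impI)
    show "indep_set V E R" by (rule R(1))
  next
    fix S assume S: "indep_set V E S"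
    have "\<exists>Or. orient Or \<and> (\<forall>s t. (s,t) \<in> Or \<longrightarrow> t \<notin> S)"
    proof (rule orient_exists)
      fix u v assume "E u v"
      then show "v \<notin> S \<or> u \<notin> S" using S unfolding indep_set_def by blast
    qed
    then obtain Or where o: "orient Or" and nt: "\<And>s t. (s,t) \<in> Or \<Longrightarrow> t \<notin> S" by blast
    have e: "indep_set W F (S \<union> (\<Union>(s,t)\<in>Or. X s t)) \<and> card (S \<union> (\<Union>(s,t)\<in>Or. X s t)) = card S + K"
      by (rule extend[OF S o nt])
    then have "card S + K \<le> card T" using T(1) unfolding max_indep_set_def by metis
    then show "card S \<le> card R" using R(3) by simp
  qed
  then show "\<exists>S. max_indep_set V E S \<and> v \<in> S" using R(2) T(2) v by blast
qed

end

theorem lemma3: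
  fixes V W :: "'a set" and E F :: "'a \<Rightarrow> 'a \<Rightarrow> bool"
  assumes "graph V E"
    and "even_subdivision V E W F"
  shows "one_extendable V E \<longleftrightarrow> one_extendable W F"
proof -
  obtain P :: "'a \<Rightarrow> 'a \<Rightarrow> 'a list" where
    P: "\<forall>u v. E u v \<longrightarrow> P v u = rev (P u v)"
       "\<forall>u v. E u v \<longrightarrow> distinct (P u v) \<and> even (length (P u v)) \<and> set (P u v) \<inter> V = {}"
       "\<forall>u v x y. E u v \<longrightarrow> E x y \<longrightarrow> {u, v} \<noteq> {x, y} \<longrightarrow> set (P u v) \<inter> set (P x y) = {}"
       "W = V \<union> (\<Union>{set (P u v) | u v. E u v})"
       "\<forall>a b. F a b \<longleftrightarrow> (\<exists>u v. E u v \<and> consec (u # P u v @ [v]) a b)"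
    using assms(2) unfolding even_subdivision_def by blast
  interpret esub V E W F P
  proof (unfold_locales)
    show "finite V" using assms(1) unfolding graph_def by blast
  next
    show "\<And>u v. E u v \<Longrightarrow> E v u" using assms(1) unfolding graph_def by blast
  next
    show "\<And>u. \<not> E u u" using assms(1) unfolding graph_def by blast
  next
    show "\<And>u v. E u v \<Longrightarrow> u \<in> V \<and> v \<in> V" using assms(1) unfolding graph_def by blast
  next
    show "\<And>u v. E u v \<Longrightarrow> P v u = rev (P u v)" using P(1) by blast
  next
    show "\<And>u v. E u v \<Longrightarrow> distinct (P u v)" using P(2) by blast
  next
    show "\<And>u v. E u v \<Longrightarrow> even (length (P u v))" using P(2) by blast
  next
    show "\<And>u v. E u v \<Longrightarrow> set (P u v) \<inter> V = {}" using P(2) by blast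
  next
    show "\<And>u v x y. E u v \<Longrightarrow> E x y \<Longrightarrow> {u, v} \<noteq> {x, y} \<Longrightarrow> set (P u v) \<inter> set (P x y) = {}"
      using P(3) by blast
  next
    show "W = V \<union> (\<Union>{set (P u v) | u v. E u v})" using P(4) .
  next
    show "\<And>a b. F a b \<longleftrightarrow> (\<exists>u v. E u v \<and> consec (u # P u v @ [v]) a b)" using P(5) by blast
  qed
  show ?thesis using fwd bwd by blast
qed

end
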